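(* Let $B>0$ be arbitrary, let $c>0$, and let $\epsilon^*(B)=\dfrac{c\,e^{-c/2}}{1+B}$. Let $\beta$ be Lipschitz on $[0,1]$ with $\|\beta\|_\infty\le B$, write $\bar\beta=\|\beta\|_\infty$, let $k=\mathcal{K}(\beta)$ be the exact backstepping kernel, and let $\hat k$ (a neural operator approximation $\hat{\mathcal K}(\beta)$) satisfy $|k(x)-\hat k(x)|<\epsilon$ for all $x\in[0,1]$ with $\epsilon\in(0,\epsilon^* )$. Then solutions of the closed-loop system $$u_t(x,t)=u_x(x,t)+\beta(x)u(0,t),\quad x\in[0,1],\qquad u(1,t)=\int_0^1\hat k(1-y)u(y,t)\,dy$$ satisfy $$\|u(t)\|\le M e^{-c^*t/2}\|u(0)\|\quad\forall t\ge0,$$ with $c^*=c-\frac{e^c}{c}\epsilon^2(1+B)^2>0$ and $$M=\Big(1+\big(\bar\beta+(1+\bar\beta)\epsilon\big)e^{(1+\bar\beta)\epsilon}\Big)\big(1+\bar\beta e^{\bar\beta}\big)e^{c/2}.$$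
   Context: The backstepping kernel operator $\mathcal{K}$ maps $\beta\in C^0[0,1]$ to the solution $k$ of $k(x)=-\beta(x)+\int_0^x\beta(x-y)k(y)\,dy$, $x\in[0,1]$. $\|\cdot\|_\infty$ is the supremum norm on $[0,1]$ and $\|u(t)\|$ is the $L^2[0,1]$ norm of $u(\cdot,t)$. *)

theory Defs
  imports "HOL-Analysis.Analysis"
begin

definition sup_norm01 :: "(real \<Rightarrow> real) \<Rightarrow> real" where
  "sup_norm01 f = (SUP x\<in>{0..1}. \<bar>f x\<bar>)"

definition L2_norm01 :: "(real \<Rightarrow> real) \<Rightarrow> real" where
  "L2_norm01 f = sqrt (integral {0..1} (\<lambda>x. (f x)\<^sup>2))"

text \<open>The backstepping kernel equation: k = K(beta) iff k is a continuous solution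
  of k(x) = -beta(x) + int_0^x beta(x-y) k(y) dy on [0,1] (the solution is unique).\<close>
definition is_bs_kernel :: "(real \<Rightarrow> real) \<Rightarrow> (real \<Rightarrow> real) \<Rightarrow> bool" where
  "is_bs_kernel \<beta> k \<longleftrightarrow> continuous_on {0..1} k \<and>
     (\<forall>x\<in>{0..1}. k x = - \<beta> x + integral {0..x} (\<lambda>y. \<beta> (x - y) * k y))"

definition closed_loop_solution ::
  "(real \<Rightarrow> real) \<Rightarrow> (real \<Rightarrow> real) \<Rightarrow> (real \<Rightarrow> real \<Rightarrow> real) \<Rightarrow> bool" where
  "closed_loop_solution \<beta> khat u \<longleftrightarrow>
     (\<exists>ux ut :: real \<Rightarrow> real \<Rightarrow> real.
        continuous_on ({0..1} \<times> {0..}) (\<lambda>p. ux (fst p) (snd p)) \<and>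
        continuous_on ({0..1} \<times> {0..}) (\<lambda>p. ut (fst p) (snd p)) \<and>
        (\<forall>x\<in>{0..1}. \<forall>t\<in>{0..}.
           ((\<lambda>p. u (fst p) (snd p)) has_derivative (\<lambda>h. ux x t * fst h + ut x t * snd h))
             (at (x, t) within ({0..1} \<times> {0..}))) \<and>
        (\<forall>x\<in>{0..1}. \<forall>t\<in>{0..}. ut x t = ux x t + \<beta> x * u 0 t) \<and>
        (\<forall>t\<in>{0..}. u 1 t = integral {0..1} (\<lambda>y. khat (1 - y) * u y t)))"

end

theory Submission
  imports Defs
begin
lemma HK_eq_L:
  fixes h :: "real \<Rightarrow> real"
  assumes "integrable lborel h" "\<And>x. x \<notin> S \<Longrightarrow> h x = 0"
  shows "integral S h = integral\<^sup>L lborel h"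
proof -
  have "integral S h = integral UNIV (\<lambda>x. if x \<in> S then h x else 0)"
    by (simp add: integral_restrict_UNIV)
  also have "(\<lambda>x. if x \<in> S then h x else 0) = h" using assms(2) by auto
  also have "integral UNIV h = integral\<^sup>L lborel h" using assms(1) by (rule integral_lborel)
  finally show ?thesis .
qed

lemma tri_fubini:
  fixes f :: "real \<Rightarrow> real \<Rightarrow> real"
  assumes cont: "continuous_on {p. 0 \<le> snd p \<and> snd p \<le> fst p \<and> fst p \<le> a} (\<lambda>p. f (fst p) (snd p))"
  shows "integral {0..a} (\<lambda>x. integral {0..x} (\<lambda>y. f x y)) = integral {0..a} (\<lambda>y. integral {y..a} (\<lambda>x. f x y))"
proof -
  define T where "T = {p::real\<times>real. 0 \<le> snd p \<and> snd p \<le> fst p \<and> fst p \<le> a}"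
  define g where "g = (\<lambda>x y. indicator T (x,y) * f x y)"
  have cT: "compact T"
  proof -
    have "T \<subseteq> cbox (0,0) (a,a)" unfolding T_def by (auto simp: cbox_def Basis_prod_def inner_prod_def)
    moreover have "closed T" unfolding T_def
      by (intro closed_Collect_conj closed_Collect_le continuous_intros)
    ultimately show ?thesis using compact_cbox bounded_subset compact_eq_bounded_closed by blast
  qed
  have "integrable lborel (\<lambda>p. indicator T p *\<^sub>R f (fst p) (snd p))"
    by (rule borel_integrable_compact[OF cT]) (use cont in \<open>simp add: T_def\<close>)
  then have int: "integrable (lborel \<Otimes>\<^sub>M lborel) (case_prod g)"
    by (simp add: lborel_prod g_def split_beta' case_prod_beta)
  have i1: "integrable lborel (\<lambda>x. \<integral>y. g x y \<partial>lborel)"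
    using lborel_pair.integrable_fst'[OF int] by simp
  have i2: "integrable lborel (\<lambda>y. \<integral>x. g x y \<partial>lborel)"
    using lborel_pair.integrable_snd[OF int] by simp
  have L: "integral {0..x} (\<lambda>y. f x y) = (\<integral>y. g x y \<partial>lborel)" if x: "x \<in> {0..a}" for x
  proof -
    have "continuous_on {0..x} (\<lambda>y. f x y)"
    proof -
      have "continuous_on {0..x} (\<lambda>y. (\<lambda>p. f (fst p) (snd p)) (x, y))"
        by (rule continuous_on_compose2[OF cont]) (use x in \<open>auto intro!: continuous_intros\<close>)
      then show ?thesis by simp
    qed
    then have si: "set_integrable lborel {0..x} (\<lambda>y. f x y)" by (rule borel_integrable_atLeastAtMost')
    have "integral {0..x} (\<lambda>y. f x y) = (LINT y : {0..x} | lborel. f x y)"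
      using set_borel_integral_eq_integral(2)[OF si] by simp
    also have "\<dots> = (\<integral>y. g x y \<partial>lborel)"
      unfolding set_lebesgue_integral_def g_def
      by (intro Bochner_Integration.integral_cong) (use x in \<open>auto simp: T_def split: split_indicator\<close>)
    finally show ?thesis .
  qed
  have R: "integral {y..a} (\<lambda>x. f x y) = (\<integral>x. g x y \<partial>lborel)" if y: "y \<in> {0..a}" for y
  proof -
    have "continuous_on {y..a} (\<lambda>x. f x y)"
    proof -
      have "continuous_on {y..a} (\<lambda>x. (\<lambda>p. f (fst p) (snd p)) (x, y))"
        by (rule continuous_on_compose2[OF cont]) (use y in \<open>auto intro!: continuous_intros\<close>)
      then show ?thesis by simp
    qed
    then have si: "set_integrable lborel {y..a} (\<lambda>x. f x y)" by (rule borel_integrable_atLeastAtMost')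
    have "integral {y..a} (\<lambda>x. f x y) = (LINT x : {y..a} | lborel. f x y)"
      using set_borel_integral_eq_integral(2)[OF si] by simp
    also have "\<dots> = (\<integral>x. g x y \<partial>lborel)"
      unfolding set_lebesgue_integral_def g_def
      by (intro Bochner_Integration.integral_cong) (use y in \<open>auto simp: T_def split: split_indicator\<close>)
    finally show ?thesis .
  qed
  have "integral {0..a} (\<lambda>x. integral {0..x} (\<lambda>y. f x y)) = integral {0..a} (\<lambda>x. \<integral>y. g x y \<partial>lborel)"
    using L by (rule integral_cong)
  also have "\<dots> = (\<integral>x. (\<integral>y. g x y \<partial>lborel) \<partial>lborel)"
  proof (rule HK_eq_L[OF i1])
    fix x assume "x \<notin> {0..a}"
    then have "(\<lambda>y. g x y) = (\<lambda>y. 0)" by (auto simp: g_def T_def indicator_def)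
    then show "(\<integral>y. g x y \<partial>lborel) = 0" by simp
  qed
  also have "\<dots> = (\<integral>y. (\<integral>x. g x y \<partial>lborel) \<partial>lborel)"
    by (rule lborel_pair.Fubini_integral[OF int, symmetric])
  also have "\<dots> = integral {0..a} (\<lambda>y. \<integral>x. g x y \<partial>lborel)"
  proof (rule HK_eq_L[OF i2, symmetric])
    fix y assume "y \<notin> {0..a}"
    then have "(\<lambda>x. g x y) = (\<lambda>x. 0)" by (auto simp: g_def T_def indicator_def)
    then show "(\<integral>x. g x y \<partial>lborel) = 0" by simp
  qed
  also have "\<dots> = integral {0..a} (\<lambda>y. integral {y..a} (\<lambda>x. f x y))"
    using R by (intro integral_cong) auto
  finally show ?thesis .
qed

definition conv :: "(real \<Rightarrow> real) \<Rightarrow> (real \<Rightarrow> real) \<Rightarrow> real \<Rightarrow> real" where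
  "conv f g x = integral {0..x} (\<lambda>y. f (x - y) * g y)"

lemma cont_refl01:
  assumes "continuous_on {0..1} f" "x \<in> {0..1::real}"
  shows "continuous_on {0..x} (\<lambda>y. f (x - y))"
  by (rule continuous_on_compose2[OF assms(1)]) (use assms(2) in \<open>auto intro!: continuous_intros\<close>)

lemma cont_sub01:
  assumes "continuous_on {0..1} f" "x \<in> {0..1::real}"
  shows "continuous_on {0..x} f"
  using assms by (auto intro: continuous_on_subset)

lemma conv_integrable:
  fixes f g :: "real \<Rightarrow> real"
  assumes "continuous_on {0..1} f" "continuous_on {0..1} g" "x \<in> {0..1::real}"
  shows "(\<lambda>y. f (x - y) * g y) integrable_on {0..x}"
proof (rule integrable_continuous_interval)
  show "continuous_on {0..x} (\<lambda>y. f (x - y) * g y)"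
    using cont_refl01[OF assms(1,3)] cont_sub01[OF assms(2,3)] by (rule continuous_on_mult)
qed

lemma integral_refl_ivl:
  fixes h :: "real \<Rightarrow> real"
  shows "integral {a..b} (\<lambda>y. h (a + b - y)) = integral {a..b} h"
proof -
  have "integral {a..b} h = integral {a-(a+b)..b-(a+b)} (\<lambda>x. h (x + (a+b)))"
    by (rule integral_shift_real_ivl[symmetric])
  also have "\<dots> = integral {-b..-a} (\<lambda>x. h (x + (a+b)))" by simp
  also have "\<dots> = integral {-b..-a} (\<lambda>x. (\<lambda>y. h (a + b - y)) (-x))" by (simp add: algebra_simps)
  also have "\<dots> = integral {a..b} (\<lambda>y. h (a + b - y))" using Henstock_Kurzweil_Integration.integral_reflect_real[of b a "\<lambda>y. h (a + b - y)"] by (simp only: minus_minus diff_minus_eq_add)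
  finally show ?thesis ..
qed

lemma conv_comm:
  shows "conv f g x = conv g f x"
proof -
  have "conv f g x = integral {0..x} (\<lambda>y. (\<lambda>y. f (x - y) * g y) (0 + x - y))"
    unfolding conv_def by (rule integral_refl_ivl[symmetric])
  also have "\<dots> = conv g f x" unfolding conv_def by (simp add: mult.commute)
  finally show ?thesis .
qed

lemma integral_scale01:
  fixes h :: "real \<Rightarrow> real"
  assumes "x \<ge> 0" "h integrable_on {0..x}"
  shows "integral {0..x} h = x * integral {0..1} (\<lambda>s. h (x * s))"
proof (cases "x = 0")
  case True then show ?thesis by simp
next
  case False
  then have xp: "x > 0" using assms by simp
  have "((\<lambda>s. h (x *\<^sub>R s + 0)) has_integral (1 / \<bar>x\<bar> ^ DIM(real)) *\<^sub>R integral {0..x} h)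
          ((\<lambda>s. (1 / x) *\<^sub>R s + - ((1 / x) *\<^sub>R 0)) ` cbox 0 x)"
    by (rule has_integral_affinity) (use assms xp in \<open>auto simp: has_integral_integral\<close>)
  moreover have "((\<lambda>s. (1 / x) *\<^sub>R s + - ((1 / x) *\<^sub>R 0)) ` cbox 0 x) = {0..1}"
  proof -
    have "(\<lambda>s. (1 / x) * s) ` {0..x} = {0..1}"
    proof
      show "(\<lambda>s. 1 / x * s) ` {0..x} \<subseteq> {0..1}" using xp by (auto simp: field_simps)
      show "{0..1} \<subseteq> (\<lambda>s. 1 / x * s) ` {0..x}"
      proof
        fix s :: real assume "s \<in> {0..1}"
        then have "x * s \<in> {0..x}" "s = 1 / x * (x * s)" using xp by (auto simp: mult_le_cancel_left1)
        then show "s \<in> (\<lambda>s. 1 / x * s) ` {0..x}" by blast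
      qed
    qed
    then show ?thesis by simp
  qed
  ultimately have "((\<lambda>s. h (x * s)) has_integral (1 / x) * integral {0..x} h) {0..1}"
    using xp by simp
  then have "integral {0..1} (\<lambda>s. h (x * s)) = (1/x) * integral {0..x} h" by (rule integral_unique)
  then show ?thesis using xp by simp
qed

lemma conv_scaled:
  assumes "continuous_on {0..1} f" "continuous_on {0..1} g" "x \<in> {0..1::real}"
  shows "conv f g x = x * integral {0..1} (\<lambda>s. f (x - x * s) * g (x * s))"
  unfolding conv_def using integral_scale01[OF _ conv_integrable[OF assms]] assms(3) by simp

lemma conv_param_cont:
  fixes g :: "real \<Rightarrow> 'a::topological_space \<Rightarrow> real"
  assumes f: "continuous_on {0..1} f" and g: "continuous_on ({0..1} \<times> P) (\<lambda>p. g (fst p) (snd p))"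
  shows "continuous_on ({0..1} \<times> P) (\<lambda>p. conv f (\<lambda>y. g y (snd p)) (fst p))"
proof -
  have gt: "continuous_on {0..1} (\<lambda>y. g y t)" if "t \<in> P" for t
  proof -
    have "continuous_on {0..1} (\<lambda>y. (\<lambda>p. g (fst p) (snd p)) (y, t))"
      by (rule continuous_on_compose2[OF g]) (use that in \<open>auto intro!: continuous_intros\<close>)
    then show ?thesis by simp
  qed
  have eq: "conv f (\<lambda>y. g y (snd p)) (fst p) = fst p * integral (cbox 0 1) (\<lambda>s. f (fst p - fst p * s) * g (fst p * s) (snd p))"
    if "p \<in> {0..1} \<times> P" for p
    using conv_scaled[OF f gt] that by (auto simp: mem_Times_iff)
  have "continuous_on ({0..1} \<times> P) (\<lambda>p. integral (cbox 0 1) (\<lambda>s. f (fst p - fst p * s) * g (fst p * s) (snd p)))"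
  proof -
    show "continuous_on ({0..1} \<times> P) (\<lambda>p. integral (cbox 0 1) (\<lambda>s. f (fst p - fst p * s) * g (fst p * s) (snd p)))"
    proof (rule integral_continuous_on_param)
      have s1: "(\<lambda>q. fst (fst q) - fst (fst q) * snd q) ` (({0..1::real} \<times> P) \<times> cbox 0 1) \<subseteq> {0..1}"
      proof -
        have "a - a * b \<in> {0..1}" if "a \<in> {0..1}" "b \<in> {0..1}" for a b :: real
        proof -
          have "a * b \<le> a" "0 \<le> a * b" using that by (auto simp: mult_left_le)
          then show ?thesis using that by auto
        qed
        then show ?thesis by (auto simp: mem_Times_iff cbox_interval box_real)
      qed
      have s2: "(\<lambda>q. (fst (fst q) * snd q, snd (fst q))) ` (({0..1::real} \<times> P) \<times> cbox 0 1) \<subseteq> {0..1} \<times> P"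
        by (auto simp: mult_le_one cbox_interval box_real)
      have c1: "continuous_on (({0..1} \<times> P) \<times> cbox 0 1) (\<lambda>q. f (fst (fst q) - fst (fst q) * snd q))"
        by (rule continuous_on_compose2[OF f _ s1]) (intro continuous_intros)
      have c2: "continuous_on (({0..1} \<times> P) \<times> cbox 0 1) (\<lambda>q. (\<lambda>p. g (fst p) (snd p)) (fst (fst q) * snd q, snd (fst q)))"
        by (rule continuous_on_compose2[OF g _ s2]) (intro continuous_intros)
      show "continuous_on (({0..1} \<times> P) \<times> cbox 0 1) (\<lambda>(p, s). f (fst p - fst p * s) * g (fst p * s) (snd p))"
        using continuous_on_mult[OF c1 c2] by (simp add: case_prod_beta)
    qed
  qed
  then have "continuous_on ({0..1} \<times> P) (\<lambda>p. fst p * integral (cbox 0 1) (\<lambda>s. f (fst p - fst p * s) * g (fst p * s) (snd p)))"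
    by (intro continuous_on_mult continuous_intros)
  then show ?thesis by (rule continuous_on_eq) (metis eq)
qed

lemma conv_cont:
  assumes f: "continuous_on {0..1} f" and g: "continuous_on {0..1} g"
  shows "continuous_on {0..1} (conv f g)"
proof -
  have "continuous_on ({0..1} \<times> {0::real}) (\<lambda>p. conv f (\<lambda>y. (\<lambda>y t. g y) y (snd p)) (fst p))"
    by (rule conv_param_cont[OF f]) (rule continuous_on_compose2[OF g], auto intro!: continuous_intros)
  then have "continuous_on {0..1} (\<lambda>x. (\<lambda>p. conv f (\<lambda>y. g y) (fst p)) (x, 0::real))"
    by (rule continuous_on_compose2) (auto intro!: continuous_intros)
  then show ?thesis by simp
qed

lemma conv_assoc:
  fixes f g h :: "real \<Rightarrow> real"
  assumes f: "continuous_on {0..1} f" and g: "continuous_on {0..1} g" and h: "continuous_on {0..1} h"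
    and x: "x \<in> {0..1}"
  shows "conv (conv f g) h x = conv f (conv g h) x"
proof -
  define T where "T = {p::real\<times>real. 0 \<le> snd p \<and> snd p \<le> fst p \<and> fst p \<le> x}"
  have cT: "continuous_on T (\<lambda>p. f (x - fst p) * (g (fst p - snd p) * h (snd p)))"
  proof (intro continuous_on_mult)
    show "continuous_on T (\<lambda>p. f (x - fst p))"
      by (rule continuous_on_compose2[OF f]) (use x in \<open>auto simp: T_def intro!: continuous_intros\<close>)
    show "continuous_on T (\<lambda>p. g (fst p - snd p))"
      by (rule continuous_on_compose2[OF g]) (use x in \<open>auto simp: T_def intro!: continuous_intros\<close>)
    show "continuous_on T (\<lambda>p. h (snd p))"
      by (rule continuous_on_compose2[OF h]) (use x in \<open>auto simp: T_def intro!: continuous_intros\<close>)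
  qed
  have "conv f (conv g h) x = integral {0..x} (\<lambda>y. integral {0..y} (\<lambda>z. f (x - y) * (g (y - z) * h z)))"
    unfolding conv_def by (intro integral_cong) simp
  also have "\<dots> = integral {0..x} (\<lambda>z. integral {z..x} (\<lambda>y. f (x - y) * (g (y - z) * h z)))"
    by (rule tri_fubini) (use cT in \<open>simp add: T_def\<close>)
  also have "\<dots> = integral {0..x} (\<lambda>z. conv f g (x - z) * h z)"
  proof (rule integral_cong)
    fix z assume z: "z \<in> {0..x}"
    have "integral {z..x} (\<lambda>y. f (x - y) * (g (y - z) * h z)) = integral {z..x} (\<lambda>y. f (x - y) * g (y - z)) * h z"
      unfolding mult.assoc[symmetric] by (rule Henstock_Kurzweil_Integration.integral_mult_left)
    also have "integral {z..x} (\<lambda>y. f (x - y) * g (y - z)) = integral {z-z..x-z} (\<lambda>r. f (x - (r + z)) * g ((r + z) - z))"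
      by (rule integral_shift_real_ivl[symmetric])
    also have "\<dots> = conv f g (x - z)" unfolding conv_def by (simp add: algebra_simps)
    finally show "integral {z..x} (\<lambda>y. f (x - y) * (g (y - z) * h z)) = conv f g (x - z) * h z" .
  qed
  also have "\<dots> = conv (conv f g) h x" unfolding conv_def ..
  finally show ?thesis ..
qed

lemma conv_cong:
  assumes "\<And>y. y \<in> {0..x} \<Longrightarrow> f y = f' y" "\<And>y. y \<in> {0..x} \<Longrightarrow> g y = g' y"
  shows "conv f g x = conv f' g' x"
  unfolding conv_def by (rule integral_cong) (use assms in auto)

lemma conv_diff_right:
  fixes f g h :: "real \<Rightarrow> real"
  assumes "continuous_on {0..1} f" "continuous_on {0..1} g" "continuous_on {0..1} h" "x \<in> {0..1}"
  shows "conv f (\<lambda>y. g y - h y) x = conv f g x - conv f h x"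
  unfolding conv_def using conv_integrable[OF assms(1,2,4)] conv_integrable[OF assms(1,3,4)]
  by (simp add: right_diff_distrib integral_diff)

lemma conv_add_right:
  fixes f g h :: "real \<Rightarrow> real"
  assumes "continuous_on {0..1} f" "continuous_on {0..1} g" "continuous_on {0..1} h" "x \<in> {0..1}"
  shows "conv f (\<lambda>y. g y + h y) x = conv f g x + conv f h x"
  unfolding conv_def using conv_integrable[OF assms(1,2,4)] conv_integrable[OF assms(1,3,4)]
  by (simp add: distrib_left integral_add)

lemma conv_diff_left:
  fixes f g h :: "real \<Rightarrow> real"
  assumes "continuous_on {0..1} f" "continuous_on {0..1} g" "continuous_on {0..1} h" "x \<in> {0..1}"
  shows "conv (\<lambda>y. f y - g y) h x = conv f h x - conv g h x"
  unfolding conv_def using conv_integrable[OF assms(1,3,4)] conv_integrable[OF assms(2,3,4)]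
  by (simp add: left_diff_distrib integral_diff)

lemma conv_add_left:
  fixes f g h :: "real \<Rightarrow> real"
  assumes "continuous_on {0..1} f" "continuous_on {0..1} g" "continuous_on {0..1} h" "x \<in> {0..1}"
  shows "conv (\<lambda>y. f y + g y) h x = conv f h x + conv g h x"
  unfolding conv_def using conv_integrable[OF assms(1,3,4)] conv_integrable[OF assms(2,3,4)]
  by (simp add: distrib_right integral_add)

lemma conv_cmult_right: "conv f (\<lambda>y. c * g y) x = c * conv f g x"
  unfolding conv_def by (simp add: mult.left_commute[of _ c])

lemma conv_const_left: "conv (\<lambda>y. c) g x = c * integral {0..x} g"
  unfolding conv_def by simp

lemma conv_abs_bound:
  fixes f g :: "real \<Rightarrow> real"
  assumes "continuous_on {0..1} f" "continuous_on {0..1} g" "x \<in> {0..1}"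
    and b: "\<And>y. y \<in> {0..1} \<Longrightarrow> \<bar>f y\<bar> \<le> b"
  shows "\<bar>conv f g x\<bar> \<le> b * integral {0..x} (\<lambda>y. \<bar>g y\<bar>)"
proof -
  have ig: "(\<lambda>y. \<bar>g y\<bar>) integrable_on {0..x}"
    by (rule integrable_continuous_interval) (intro continuous_intros cont_sub01[OF assms(2,3)])
  have "norm (conv f g x) \<le> integral {0..x} (\<lambda>y. b * \<bar>g y\<bar>)"
    unfolding conv_def
  proof (rule integral_norm_bound_integral[OF conv_integrable[OF assms(1-3)]])
    show "(\<lambda>y. b * \<bar>g y\<bar>) integrable_on {0..x}" using ig by (rule integrable_on_mult_right)
    fix y assume y: "y \<in> {0..x}"
    then have "\<bar>f (x - y)\<bar> \<le> b" using assms(3) by (intro b) auto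
    then show "norm (f (x - y) * g y) \<le> b * \<bar>g y\<bar>" by (simp add: abs_mult mult_right_mono)
  qed
  then show ?thesis by simp
qed

lemma decr_le:
  fixes f f' :: "real \<Rightarrow> real"
  assumes d: "\<And>x. x \<in> {a..b} \<Longrightarrow> (f has_real_derivative f' x) (at x within {a..b})"
    and n: "\<And>x. x \<in> {a..b} \<Longrightarrow> f' x \<le> 0" and x: "x \<in> {a..b}"
  shows "f x \<le> f a"
proof -
  have "\<exists>\<xi>\<in>{a..x}. f x - f a = (\<lambda>h. f' \<xi> * h) (x - a)"
  proof (rule mvt_very_simple)
    show "a \<le> x" using x by simp
    fix y assume "a \<le> y" "y \<le> x"
    then have "(f has_real_derivative f' y) (at y within {a..b})" using x by (intro d) auto
    then have "(f has_real_derivative f' y) (at y within {a..x})"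
      by (rule DERIV_subset) (use x in auto)
    then show "(f has_derivative (\<lambda>h. f' y * h)) (at y within {a..x})"
      by (simp add: has_field_derivative_def)
  qed
  then obtain \<xi> where "\<xi> \<in> {a..x}" "f x - f a = f' \<xi> * (x - a)" by auto
  moreover have "f' \<xi> \<le> 0" using \<open>\<xi> \<in> {a..x}\<close> x by (intro n) auto
  ultimately show ?thesis using x mult_nonpos_nonneg[of "f' \<xi>" "x - a"] by auto
qed

lemma amgm_sq:
  fixes X A G :: real
  assumes "0 \<le> X" "0 \<le> A" "0 \<le> G" and H: "\<And>l. l > 0 \<Longrightarrow> X \<le> (l * A + G / l) / 2"
  shows "X\<^sup>2 \<le> A * G"
proof (cases "A > 0 \<and> G > 0")
  case True
  define l where "l = sqrt (G / A)"
  have lp: "l > 0" using True by (simp add: l_def)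
  have "l * A = sqrt (A * G)" using True
    by (simp add: l_def real_sqrt_divide real_sqrt_mult field_simps)
  moreover have "G / l = sqrt (A * G)" using True
    by (simp add: l_def real_sqrt_divide real_sqrt_mult field_simps)
  ultimately have "X \<le> sqrt (A * G)" using H[OF lp] by simp
  then have "X\<^sup>2 \<le> (sqrt (A * G))\<^sup>2" using assms(1) by (intro power_mono) auto
  then show ?thesis using assms by simp
next
  case False
  have "X \<le> 0"
  proof (rule ccontr)
    assume "\<not> X \<le> 0"
    then have Xp: "X > 0" by simp
    show False
    proof (cases "A = 0")
      case True
      define l where "l = G / X + 1"
      have "0 \<le> G / X" using Xp assms(3) by simp
      then have lp: "l > 0" by (simp add: l_def)
      define q where "q = G / l"
      have "G < X * l" using Xp assms by (simp add: l_def field_simps)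
      then have q1: "q < X" using lp by (simp add: q_def divide_less_eq)
      have q2: "X \<le> q / 2" using H[OF lp] True by (simp add: q_def)
      have q3: "0 \<le> q" using assms lp by (simp add: q_def)
      show False using q1 q2 q3 by linarith
    next
      case False
      then have "G = 0" using \<open>\<not> (A > 0 \<and> G > 0)\<close> assms by auto
      define l where "l = X / A"
      have Ap: "A > 0" using False assms by simp
      have lp: "l > 0" using Xp Ap by (simp add: l_def)
      have "X \<le> X / 2" using H[OF lp] \<open>G = 0\<close> Ap by (simp add: l_def)
      then show False using Xp by simp
    qed
  qed
  then have "X = 0" using assms by simp
  then show ?thesis using assms by simp
qed

lemma cs_integral:
  fixes f g :: "real \<Rightarrow> real"
  assumes f: "continuous_on {0..1} f" and g: "continuous_on {0..1} g"
  shows "(integral {0..1} (\<lambda>x. \<bar>f x * g x\<bar>))\<^sup>2 \<le> integral {0..1} (\<lambda>x. (f x)\<^sup>2) * integral {0..1} (\<lambda>x. (g x)\<^sup>2)"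
proof (rule amgm_sq)
  have i1: "(\<lambda>x. \<bar>f x * g x\<bar>) integrable_on {0..1}" and i2: "(\<lambda>x. (f x)\<^sup>2) integrable_on {0..1}"
    and i3: "(\<lambda>x. (g x)\<^sup>2) integrable_on {0..1}"
    by (auto intro!: integrable_continuous_interval continuous_intros f g)
  show "0 \<le> integral {0..1} (\<lambda>x. \<bar>f x * g x\<bar>)" by (rule integral_nonneg[OF i1]) auto
  show "0 \<le> integral {0..1} (\<lambda>x. (f x)\<^sup>2)" by (rule integral_nonneg[OF i2]) auto
  show "0 \<le> integral {0..1} (\<lambda>x. (g x)\<^sup>2)" by (rule integral_nonneg[OF i3]) auto
  fix l :: real assume lp: "l > 0"
  have "integral {0..1} (\<lambda>x. \<bar>f x * g x\<bar>) \<le> integral {0..1} (\<lambda>x. (l * (f x)\<^sup>2 + (g x)\<^sup>2 / l) / 2)"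
  proof (rule Henstock_Kurzweil_Integration.integral_le[OF i1])
    show "(\<lambda>x. (l * (f x)\<^sup>2 + (g x)\<^sup>2 / l) / 2) integrable_on {0..1}"
      using lp by (auto intro!: integrable_continuous_interval continuous_intros f g)
    fix x
    have "0 \<le> (l * \<bar>f x\<bar> - \<bar>g x\<bar>)\<^sup>2" by simp
    then have "2 * l * \<bar>f x * g x\<bar> \<le> l * (l * (f x)\<^sup>2) + (g x)\<^sup>2"
      by (simp add: power2_eq_square algebra_simps abs_mult)
    then have "\<bar>f x * g x\<bar> \<le> (l * (l * (f x)\<^sup>2) + (g x)\<^sup>2) / (2 * l)"
      using lp by (simp add: field_simps)
    also have "\<dots> = (l * (f x)\<^sup>2 + (g x)\<^sup>2 / l) / 2" using lp by (simp add: field_simps power2_eq_square)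
    finally show "\<bar>f x * g x\<bar> \<le> (l * (f x)\<^sup>2 + (g x)\<^sup>2 / l) / 2" .
  qed
  also have "\<dots> = (l * integral {0..1} (\<lambda>x. (f x)\<^sup>2) + integral {0..1} (\<lambda>x. (g x)\<^sup>2) / l) / 2"
  proof -
    have "integral {0..1} (\<lambda>x. l * (f x)\<^sup>2 + (g x)\<^sup>2 / l) = integral {0..1} (\<lambda>x. l * (f x)\<^sup>2) + integral {0..1} (\<lambda>x. (g x)\<^sup>2 / l)"
      by (rule integral_add) (use lp in \<open>auto intro!: integrable_continuous_interval continuous_intros f g\<close>)
    then show ?thesis by simp
  qed
  finally show "integral {0..1} (\<lambda>x. \<bar>f x * g x\<bar>) \<le> (l * integral {0..1} (\<lambda>x. (f x)\<^sup>2) + integral {0..1} (\<lambda>x. (g x)\<^sup>2) / l) / 2" .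
qed

lemma pert_L2:
  fixes f g :: "real \<Rightarrow> real"
  assumes f: "continuous_on {0..1} f" and g: "continuous_on {0..1} g" and K: "K \<ge> 0"
    and gb: "\<And>x. x \<in> {0..1} \<Longrightarrow> \<bar>g x\<bar> \<le> K * integral {0..1} (\<lambda>y. \<bar>f y\<bar>)"
  shows "integral {0..1} (\<lambda>x. (f x + g x)\<^sup>2) \<le> (1 + K)\<^sup>2 * integral {0..1} (\<lambda>x. (f x)\<^sup>2)"
proof (cases "K = 0")
  case True
  then have "\<And>x. x \<in> {0..1} \<Longrightarrow> g x = 0" using gb by fastforce
  then have "integral {0..1} (\<lambda>x. (f x + g x)\<^sup>2) = integral {0..1} (\<lambda>x. (f x)\<^sup>2)"
    by (intro integral_cong) auto
  then show ?thesis using True by simp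
next
  case False
  then have Kp: "K > 0" using K by simp
  define A where "A = integral {0..1} (\<lambda>x. (f x)\<^sup>2)"
  define I where "I = integral {0..1} (\<lambda>y. \<bar>f y\<bar>)"
  have iA: "(\<lambda>x. (f x)\<^sup>2) integrable_on {0..1}" and iI: "(\<lambda>y. \<bar>f y\<bar>) integrable_on {0..1}"
    and ig: "(\<lambda>x. (g x)\<^sup>2) integrable_on {0..1}"
    by (auto intro!: integrable_continuous_interval continuous_intros f g)
  have I0: "0 \<le> I" unfolding I_def by (rule integral_nonneg[OF iI]) auto
  have IA: "I\<^sup>2 \<le> A"
    using cs_integral[OF f continuous_on_const[of _ 1]] by (simp add: I_def A_def)
  have G: "integral {0..1} (\<lambda>x. (g x)\<^sup>2) \<le> K\<^sup>2 * A"
  proof -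
    have "integral {0..1} (\<lambda>x. (g x)\<^sup>2) \<le> integral {0..1} (\<lambda>x::real. (K * I)\<^sup>2)"
    proof (rule Henstock_Kurzweil_Integration.integral_le[OF ig])
      show "(\<lambda>x::real. (K * I)\<^sup>2) integrable_on {0..1}" by (rule integrable_const_ivl)
      fix x :: real assume "x \<in> {0..1}"
      then have "\<bar>g x\<bar> \<le> K * I" using gb by (simp add: I_def)
      then show "(g x)\<^sup>2 \<le> (K * I)\<^sup>2" by (metis abs_ge_zero order_trans power2_abs power_mono)
    qed
    also have "\<dots> = K\<^sup>2 * I\<^sup>2" by (simp add: power_mult_distrib)
    also have "\<dots> \<le> K\<^sup>2 * A" using IA by (simp add: mult_left_mono)
    finally show ?thesis .
  qed
  have "integral {0..1} (\<lambda>x. (f x + g x)\<^sup>2) \<le> integral {0..1} (\<lambda>x. (1 + K) * (f x)\<^sup>2 + (1 + 1 / K) * (g x)\<^sup>2)"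
  proof (rule Henstock_Kurzweil_Integration.integral_le)
    show "(\<lambda>x. (f x + g x)\<^sup>2) integrable_on {0..1}"
      by (auto intro!: integrable_continuous_interval continuous_intros f g)
    show "(\<lambda>x. (1 + K) * (f x)\<^sup>2 + (1 + 1 / K) * (g x)\<^sup>2) integrable_on {0..1}"
      by (auto intro!: integrable_continuous_interval continuous_intros f g)
    fix x
    have "0 \<le> (K * f x - g x)\<^sup>2 / K" using Kp by simp
    moreover have "(1 + K) * (f x)\<^sup>2 + (1 + 1 / K) * (g x)\<^sup>2 - (f x + g x)\<^sup>2 = (K * f x - g x)\<^sup>2 / K"
      using Kp by (simp add: field_simps power2_eq_square)
    ultimately show "(f x + g x)\<^sup>2 \<le> (1 + K) * (f x)\<^sup>2 + (1 + 1 / K) * (g x)\<^sup>2" by linarith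
  qed
  also have "\<dots> = (1 + K) * A + (1 + 1 / K) * integral {0..1} (\<lambda>x. (g x)\<^sup>2)"
  proof -
    have "integral {0..1} (\<lambda>x. (1 + K) * (f x)\<^sup>2 + (1 + 1 / K) * (g x)\<^sup>2) = integral {0..1} (\<lambda>x. (1 + K) * (f x)\<^sup>2) + integral {0..1} (\<lambda>x. (1 + 1 / K) * (g x)\<^sup>2)"
      by (rule integral_add) (use iA ig in \<open>auto intro: integrable_on_mult_right\<close>)
    then show ?thesis by (simp add: A_def)
  qed
  also have "\<dots> \<le> (1 + K) * A + (1 + 1 / K) * (K\<^sup>2 * A)"
    using G Kp by (intro add_left_mono mult_left_mono) auto
  also have "\<dots> = (1 + K)\<^sup>2 * A" using Kp by (simp add: field_simps power2_eq_square)
  finally show ?thesis by (simp add: A_def)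
qed

lemma L2_le_from_sq:
  assumes "integral {0..1} (\<lambda>x. (f x)\<^sup>2) \<le> C\<^sup>2 * integral {0..1} (\<lambda>x. (g x)\<^sup>2)" "C \<ge> 0"
  shows "L2_norm01 f \<le> C * L2_norm01 g"
proof -
  have "L2_norm01 f \<le> sqrt (C\<^sup>2 * integral {0..1} (\<lambda>x. (g x)\<^sup>2))"
    unfolding L2_norm01_def using assms(1) by (rule real_sqrt_le_mono)
  also have "\<dots> = C * L2_norm01 g" using assms(2) by (simp add: L2_norm01_def real_sqrt_mult)
  finally show ?thesis .
qed

locale setting =
  fixes \<beta> k khat :: "real \<Rightarrow> real" and u ux ut :: "real \<Rightarrow> real \<Rightarrow> real" and bb \<epsilon> c B :: real
  assumes bcont: "continuous_on {0..1} \<beta>"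
    and bnd: "\<And>x. x \<in> {0..1} \<Longrightarrow> \<bar>\<beta> x\<bar> \<le> bb"
    and bb0: "0 \<le> bb" and bbB: "bb \<le> B"
    and kcont: "continuous_on {0..1} k"
    and keq: "\<And>x. x \<in> {0..1} \<Longrightarrow> k x = - \<beta> x + conv \<beta> k x"
    and khcont: "continuous_on {0..1} khat"
    and err: "\<And>x. x \<in> {0..1} \<Longrightarrow> \<bar>k x - khat x\<bar> < \<epsilon>"
    and cpos: "c > 0"
    and uxc: "continuous_on ({0..1} \<times> {0..}) (\<lambda>p. ux (fst p) (snd p))"
    and utc: "continuous_on ({0..1} \<times> {0..}) (\<lambda>p. ut (fst p) (snd p))"
    and ud: "\<And>x t. x \<in> {0..1} \<Longrightarrow> t \<in> {0..} \<Longrightarrow>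
        ((\<lambda>p. u (fst p) (snd p)) has_derivative (\<lambda>h. ux x t * fst h + ut x t * snd h)) (at (x, t) within ({0..1} \<times> {0..}))"
    and pde: "\<And>x t. x \<in> {0..1} \<Longrightarrow> t \<in> {0..} \<Longrightarrow> ut x t = ux x t + \<beta> x * u 0 t"
    and bc: "\<And>t. t \<in> {0..} \<Longrightarrow> u 1 t = integral {0..1} (\<lambda>y. khat (1 - y) * u y t)"
begin

lemma ucont: "continuous_on ({0..1} \<times> {0..}) (\<lambda>p. u (fst p) (snd p))"
proof -
  have "continuous (at p within ({0..1} \<times> {0..})) (\<lambda>p. u (fst p) (snd p))" if "p \<in> {0..1} \<times> {0..}" for p
    using ud[of "fst p" "snd p"] that by (intro has_derivative_continuous) (auto simp: mem_Times_iff)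
  then show ?thesis by (simp add: continuous_on_eq_continuous_within)
qed

lemma slice_cont:
  assumes F: "continuous_on ({0..1} \<times> {0..}) (\<lambda>p. F (fst p) (snd p))" and t: "t \<ge> 0"
  shows "continuous_on {0..1} (\<lambda>x. F x t)"
proof -
  have "continuous_on {0..1} (\<lambda>x. (\<lambda>p. F (fst p) (snd p)) (x, t))"
    by (rule continuous_on_compose2[OF F]) (use t in \<open>auto intro!: continuous_intros\<close>)
  then show ?thesis by simp
qed

lemma slice_cont_t:
  assumes F: "continuous_on ({0..1} \<times> {0..}) (\<lambda>p. F (fst p) (snd p))" and x: "x \<in> {0..1}"
  shows "continuous_on {0..} (\<lambda>t. F x t)"
proof -
  have "continuous_on {0..} (\<lambda>t. (\<lambda>p. F (fst p) (snd p)) (x, t))"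
    by (rule continuous_on_compose2[OF F]) (use x in \<open>auto intro!: continuous_intros\<close>)
  then show ?thesis by simp
qed

lemma uxd:
  assumes x: "x \<in> {0..1}" and t: "t \<ge> 0"
  shows "((\<lambda>x. u x t) has_real_derivative ux x t) (at x within {0..1})"
proof -
  have "((\<lambda>y. (\<lambda>p. u (fst p) (snd p)) (y, t)) has_derivative
          (\<lambda>h. (\<lambda>q h. ux (fst q) (snd q) * fst h + ut (fst q) (snd q) * snd h) (x, t) (h, 0))) (at x within {0..1})"
  proof (rule has_derivative_in_compose2[where t="{0..1} \<times> {0..}"])
    show "\<And>p. p \<in> {0..1} \<times> {0..} \<Longrightarrow> ((\<lambda>p. u (fst p) (snd p)) has_derivative
            (\<lambda>h. ux (fst p) (snd p) * fst h + ut (fst p) (snd p) * snd h)) (at p within {0..1} \<times> {0..})"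
      using ud by (auto simp: mem_Times_iff)
    show "(\<lambda>y. (y, t)) ` {0..1} \<subseteq> {0..1} \<times> {0..}" using t by auto
    show "x \<in> {0..1}" by (rule x)
    show "((\<lambda>y. (y, t)) has_derivative (\<lambda>h. (h, 0))) (at x within {0..1})"
      by (auto intro!: derivative_eq_intros)
  qed
  then show ?thesis by (simp add: has_field_derivative_def)
qed

lemma utd:
  assumes x: "x \<in> {0..1}" and t: "t \<ge> 0"
  shows "((\<lambda>t. u x t) has_real_derivative ut x t) (at t within {0..})"
proof -
  have "((\<lambda>s. (\<lambda>p. u (fst p) (snd p)) (x, s)) has_derivative
          (\<lambda>h. (\<lambda>q h. ux (fst q) (snd q) * fst h + ut (fst q) (snd q) * snd h) (x, t) (0, h))) (at t within {0..})"
  proof (rule has_derivative_in_compose2[where t="{0..1} \<times> {0..}"])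
    show "\<And>p. p \<in> {0..1} \<times> {0..} \<Longrightarrow> ((\<lambda>p. u (fst p) (snd p)) has_derivative
            (\<lambda>h. ux (fst p) (snd p) * fst h + ut (fst p) (snd p) * snd h)) (at p within {0..1} \<times> {0..})"
      using ud by (auto simp: mem_Times_iff)
    show "(\<lambda>s. (x, s)) ` {0..} \<subseteq> {0..1} \<times> {0..}" using x by auto
    show "t \<in> {0..}" using t by simp
    show "((\<lambda>s. (x, s)) has_derivative (\<lambda>h. (0, h))) (at t within {0..})"
      by (auto intro!: derivative_eq_intros)
  qed
  then show ?thesis by (simp add: has_field_derivative_def)
qed

definition w where "w x t = u x t - conv k (\<lambda>y. u y t) x"
definition W where "W x t = ut x t - conv k (\<lambda>y. ut y t) x"

lemma ftc_ux:
  assumes x: "x \<in> {0..1}" and t: "t \<ge> 0"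
  shows "integral {0..x} (\<lambda>y. ux y t) = u x t - u 0 t"
proof -
  have "((\<lambda>y. ux y t) has_integral (u x t - u 0 t)) {0..x}"
  proof (rule fundamental_theorem_of_calculus)
    show "0 \<le> x" using x by simp
    fix y assume y: "y \<in> {0..x}"
    then have "((\<lambda>x. u x t) has_real_derivative ux y t) (at y within {0..1})" using x t by (intro uxd) auto
    then have "((\<lambda>x. u x t) has_real_derivative ux y t) (at y within {0..x})"
      by (rule DERIV_subset) (use x in auto)
    then show "((\<lambda>x. u x t) has_vector_derivative ux y t) (at y within {0..x})"
      by (simp add: has_real_derivative_iff_has_vector_derivative)
  qed
  then show ?thesis by (rule integral_unique)
qed

end

context setting begin

lemma one_cont: "continuous_on {0..1} (\<lambda>y::real. 1::real)" by simp

lemma Ucont: "t \<ge> 0 \<Longrightarrow> continuous_on {0..1} (\<lambda>y. u y t)"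
  using slice_cont[OF ucont] .
lemma Uxcont: "t \<ge> 0 \<Longrightarrow> continuous_on {0..1} (\<lambda>y. ux y t)"
  using slice_cont[OF uxc] .
lemma Utcont: "t \<ge> 0 \<Longrightarrow> continuous_on {0..1} (\<lambda>y. ut y t)"
  using slice_cont[OF utc] .

lemma wcont: "t \<ge> 0 \<Longrightarrow> continuous_on {0..1} (\<lambda>x. w x t)"
  unfolding w_def by (intro continuous_intros Ucont conv_cont kcont)

lemma Wcont: "t \<ge> 0 \<Longrightarrow> continuous_on {0..1} (\<lambda>x. W x t)"
  unfolding W_def by (intro continuous_intros Utcont conv_cont kcont)

lemma int_cont: "continuous_on {0..1} f \<Longrightarrow> continuous_on {0..1} (\<lambda>x. integral {0..x} (f::real\<Rightarrow>real))"
  by (intro indefinite_integral_continuous_1 integrable_continuous_interval)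

lemma conv_one: "conv (\<lambda>y. 1) g x = integral {0..x} g"
  using conv_const_left[of 1 g x] by simp

lemma spatial:
  assumes t: "t \<ge> 0" and x: "x \<in> {0..1}"
  shows "w x t = u 0 t + integral {0..x} (\<lambda>\<xi>. W \<xi> t)"
proof -
  define U where "U = (\<lambda>y. u y t)"
  define Ut where "Ut = (\<lambda>y. ut y t)"
  define u0 where "u0 = u 0 t"
  define one where "one = (\<lambda>y::real. 1::real)"
  define Bb where "Bb = (\<lambda>\<xi>. integral {0..\<xi>} \<beta>)"
  define P where "P = (\<lambda>\<xi>. integral {0..\<xi>} Ut)"
  have cU: "continuous_on {0..1} U" unfolding U_def using Ucont[OF t] .
  have cUt: "continuous_on {0..1} Ut" unfolding Ut_def using Utcont[OF t] .
  have c1: "continuous_on {0..1} one" unfolding one_def by simp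
  have cB: "continuous_on {0..1} Bb" unfolding Bb_def by (rule int_cont[OF bcont])
  have cP: "continuous_on {0..1} P" unfolding P_def by (rule int_cont[OF cUt])
  have Peq: "P \<xi> = U \<xi> - u0 * one \<xi> + u0 * Bb \<xi>" if \<xi>: "\<xi> \<in> {0..1}" for \<xi>
  proof -
    have "P \<xi> = integral {0..\<xi>} (\<lambda>y. ux y t + u0 * \<beta> y)"
      unfolding P_def Ut_def u0_def
      by (rule integral_cong) (use \<xi> t in \<open>auto simp: pde mult.commute\<close>)
    also have "\<dots> = integral {0..\<xi>} (\<lambda>y. ux y t) + u0 * Bb \<xi>"
      unfolding Bb_def
      by (subst integral_add) (auto intro!: integrable_continuous_interval
          cont_sub01[OF Uxcont[OF t] \<xi>] cont_sub01[OF bcont \<xi>] integrable_on_mult_right)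
    also have "integral {0..\<xi>} (\<lambda>y. ux y t) = U \<xi> - u0"
      unfolding U_def u0_def using ftc_ux[OF \<xi> t] .
    finally show ?thesis by (simp add: one_def)
  qed
  have ckeq: "conv k one y = - Bb y + conv k Bb y" if y: "y \<in> {0..1}" for y
  proof -
    have "conv k one y = conv one k y" by (rule conv_comm)
    also have "\<dots> = integral {0..y} k" unfolding one_def by (rule conv_one)
    also have "\<dots> = integral {0..y} (\<lambda>z. - \<beta> z + conv \<beta> k z)"
    proof (rule integral_cong)
      fix z assume "z \<in> {0..y}"
      then show "k z = - \<beta> z + conv \<beta> k z" using y by (intro keq) auto
    qed
    also have "\<dots> = - Bb y + integral {0..y} (conv \<beta> k)"
      unfolding Bb_def
      by (subst integral_add) (auto intro!: integrable_continuous_interval continuous_intros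
          cont_sub01[OF bcont y] cont_sub01[OF conv_cont[OF bcont kcont] y])
    also have "integral {0..y} (conv \<beta> k) = conv one (conv \<beta> k) y"
      unfolding one_def by (rule conv_one[symmetric])
    also have "\<dots> = conv (conv one \<beta>) k y"
      by (rule conv_assoc[symmetric, OF c1 bcont kcont y])
    also have "\<dots> = conv k (conv one \<beta>) y" by (rule conv_comm)
    also have "\<dots> = conv k Bb y"
      by (rule conv_cong) (auto simp: Bb_def one_def conv_one)
    finally show ?thesis .
  qed
  have "integral {0..x} (\<lambda>\<xi>. W \<xi> t) = P x - integral {0..x} (conv k Ut)"
    unfolding W_def P_def Ut_def
    by (subst integral_diff) (auto intro!: integrable_continuous_interval
          cont_sub01[OF Utcont[OF t] x] cont_sub01[OF conv_cont[OF kcont Utcont[OF t]] x])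
  also have "integral {0..x} (conv k Ut) = conv one (conv k Ut) x"
    unfolding one_def by (rule conv_one[symmetric])
  also have "\<dots> = conv (conv one k) Ut x" by (rule conv_assoc[symmetric, OF c1 kcont cUt x])
  also have "\<dots> = conv (conv k one) Ut x" by (rule conv_cong) (auto intro: conv_comm)
  also have "\<dots> = conv k (conv one Ut) x" by (rule conv_assoc[OF kcont c1 cUt x])
  also have "\<dots> = conv k (\<lambda>\<xi>. U \<xi> - u0 * one \<xi> + u0 * Bb \<xi>) x"
  proof (rule conv_cong)
    fix y assume "y \<in> {0..x}"
    then have "y \<in> {0..1}" using x by auto
    then show "conv one Ut y = U y - u0 * one y + u0 * Bb y"
      using Peq[of y] unfolding P_def one_def conv_one by simp
  qed simp
  also have "\<dots> = conv k U x - u0 * conv k one x + u0 * conv k Bb x"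
  proof -
    have ca: "continuous_on {0..1} (\<lambda>\<xi>. U \<xi> - u0 * one \<xi>)" by (intro continuous_intros cU c1)
    have cb: "continuous_on {0..1} (\<lambda>\<xi>. u0 * one \<xi>)" by (intro continuous_intros c1)
    have cc: "continuous_on {0..1} (\<lambda>\<xi>. u0 * Bb \<xi>)" by (intro continuous_intros cB)
    show ?thesis
      using conv_add_right[OF kcont ca cc x] conv_diff_right[OF kcont cU cb x]
      by (simp add: conv_cmult_right)
  qed
  finally have E1: "integral {0..x} (\<lambda>\<xi>. W \<xi> t) = P x - (conv k U x - u0 * conv k one x + u0 * conv k Bb x)" .
  have Peq': "P x = U x - u0 + u0 * Bb x" using Peq[OF x] by (simp add: one_def)
  have h0: "conv k Bb x = Bb x + conv k one x" using ckeq[OF x] by linarith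
  have h: "u0 * conv k Bb x = u0 * Bb x + u0 * conv k one x" unfolding h0 by (simp add: distrib_left)
  have "integral {0..x} (\<lambda>\<xi>. W \<xi> t) = U x - u0 - conv k U x"
    using E1 Peq' h by linarith
  then show ?thesis unfolding w_def U_def u0_def by simp
qed

lemma inverse:
  assumes t: "t \<ge> 0" and x: "x \<in> {0..1}"
  shows "u x t = w x t - conv \<beta> (\<lambda>y. w y t) x"
proof -
  define U where "U = (\<lambda>y. u y t)"
  have cU: "continuous_on {0..1} U" unfolding U_def using Ucont[OF t] .
  have ckU: "continuous_on {0..1} (conv k U)" by (rule conv_cont[OF kcont cU])
  have "conv \<beta> (\<lambda>y. w y t) x = conv \<beta> (\<lambda>y. U y - conv k U y) x"
    unfolding w_def U_def by simp
  also have "\<dots> = conv \<beta> U x - conv \<beta> (conv k U) x" by (rule conv_diff_right[OF bcont cU ckU x])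
  also have "conv \<beta> (conv k U) x = conv (conv \<beta> k) U x" by (rule conv_assoc[symmetric, OF bcont kcont cU x])
  also have "\<dots> = conv (\<lambda>y. k y + \<beta> y) U x"
    by (rule conv_cong) (use x in \<open>auto simp: keq\<close>)
  also have "\<dots> = conv k U x + conv \<beta> U x" by (rule conv_add_left[OF kcont bcont cU x])
  finally have "conv \<beta> (\<lambda>y. w y t) x = - conv k U x" by simp
  then show ?thesis unfolding w_def U_def by simp
qed

end

context setting begin

lemma kb:
  assumes x: "x \<in> {0..1}"
  shows "\<bar>k x\<bar> \<le> bb * exp bb"
proof -
  define \<phi> where "\<phi> = (\<lambda>x. integral {0..x} (\<lambda>y. \<bar>k y\<bar>))"
  have cak: "continuous_on {0..1} (\<lambda>y. \<bar>k y\<bar>)" by (intro continuous_intros kcont)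
  have hk: "\<bar>k y\<bar> \<le> bb * (1 + \<phi> y)" if y: "y \<in> {0..1}" for y
  proof -
    have "\<bar>conv \<beta> k y\<bar> \<le> bb * \<phi> y" unfolding \<phi>_def by (rule conv_abs_bound[OF bcont kcont y bnd])
    moreover have "\<bar>\<beta> y\<bar> \<le> bb" by (rule bnd[OF y])
    ultimately show ?thesis using keq[OF y] by (simp add: algebra_simps)
  qed
  define \<psi> where "\<psi> = (\<lambda>x. exp (- bb * x) * (1 + \<phi> x))"
  have dpsi: "(\<psi> has_real_derivative (exp (- bb * y) * (\<bar>k y\<bar> - bb * (1 + \<phi> y)))) (at y within {0..1})"
    if y: "y \<in> {0..1}" for y
  proof -
    have "(\<phi> has_real_derivative \<bar>k y\<bar>) (at y within {0..1})"
      unfolding \<phi>_def by (rule integral_has_real_derivative[OF cak y])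
    then show ?thesis unfolding \<psi>_def
      by (auto intro!: derivative_eq_intros simp: algebra_simps)
  qed
  have "\<psi> x \<le> \<psi> 0"
  proof (rule decr_le[OF dpsi _ x])
    fix y :: real assume "y \<in> {0..1}"
    then show "exp (- bb * y) * (\<bar>k y\<bar> - bb * (1 + \<phi> y)) \<le> 0"
      using hk by (simp add: mult_nonneg_nonpos)
  qed
  then have "exp (- bb * x) * (1 + \<phi> x) \<le> 1" by (simp add: \<psi>_def \<phi>_def)
  then have "1 + \<phi> x \<le> exp (bb * x)"
    by (simp add: exp_minus field_simps)
  also have "\<dots> \<le> exp bb" using x bb0 by (simp add: mult_left_le)
  finally have "1 + \<phi> x \<le> exp bb" .
  then have "bb * (1 + \<phi> x) \<le> bb * exp bb" using bb0 by (rule mult_left_mono)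
  then show ?thesis using hk[OF x] by linarith
qed

lemma eps_pos: "\<epsilon> > 0"
  using err[of 0] by simp

definition V where "V t = integral {0..1} (\<lambda>x. exp (c * x) * (w x t)\<^sup>2)"

lemma V_nonneg: "t \<ge> 0 \<Longrightarrow> 0 \<le> V t"
  unfolding V_def
  by (rule integral_nonneg) (auto intro!: integrable_continuous_interval continuous_intros wcont)

lemma int_exp_neg: "integral {0..1} (\<lambda>x. exp (- c * x)) \<le> 1 / c"
proof -
  have "((\<lambda>x. exp (- c * x)) has_integral ((\<lambda>x. - exp (- c * x) / c) 1 - (\<lambda>x. - exp (- c * x) / c) 0)) {0..1}"
  proof (rule fundamental_theorem_of_calculus)
    fix x :: real assume "x \<in> {0..1}"
    have "((\<lambda>x. - exp (- c * x) / c) has_real_derivative exp (- c * x)) (at x within {0..1})"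
      using cpos by (auto intro!: derivative_eq_intros simp: field_simps)
    then show "((\<lambda>x. - exp (- c * x) / c) has_vector_derivative exp (- c * x)) (at x within {0..1})"
      by (simp add: has_real_derivative_iff_has_vector_derivative)
  qed simp
  then have "integral {0..1} (\<lambda>x. exp (- c * x)) = (1 - exp (- c)) / c"
    using cpos by (simp add: integral_unique field_simps)
  also have "\<dots> \<le> 1 / c" using cpos by (simp add: divide_right_mono)
  finally show ?thesis .
qed

lemma absw_bound:
  assumes t: "t \<ge> 0"
  shows "(integral {0..1} (\<lambda>x. \<bar>w x t\<bar>))\<^sup>2 \<le> V t / c"
proof -
  have cf: "continuous_on {0..1} (\<lambda>x. exp (- c * x / 2))" by (intro continuous_intros) auto
  have cg: "continuous_on {0..1} (\<lambda>x. exp (c * x / 2) * w x t)" by (intro continuous_intros wcont t) auto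
  have e1: "integral {0..1} (\<lambda>x. \<bar>exp (- c * x / 2) * (exp (c * x / 2) * w x t)\<bar>) = integral {0..1} (\<lambda>x. \<bar>w x t\<bar>)"
  proof (rule integral_cong)
    fix x :: real
    have "exp (- c * x / 2) * exp (c * x / 2) = 1" by (simp add: exp_add[symmetric])
    then show "\<bar>exp (- c * x / 2) * (exp (c * x / 2) * w x t)\<bar> = \<bar>w x t\<bar>"
      by (metis mult.assoc mult_1)
  qed
  have e2: "integral {0..1} (\<lambda>x. (exp (- c * x / 2))\<^sup>2) = integral {0..1} (\<lambda>x. exp (- c * x))"
    by (rule integral_cong) (simp add: power2_eq_square exp_add[symmetric])
  have e3: "integral {0..1} (\<lambda>x. (exp (c * x / 2) * w x t)\<^sup>2) = V t"
    unfolding V_def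
    by (rule integral_cong) (simp add: power2_eq_square exp_add[symmetric] algebra_simps)
  have "(integral {0..1} (\<lambda>x. \<bar>w x t\<bar>))\<^sup>2 \<le> integral {0..1} (\<lambda>x. exp (- c * x)) * V t"
    using cs_integral[OF cf cg] e1 e2 e3 by simp
  also have "\<dots> \<le> (1 / c) * V t" by (rule mult_right_mono[OF int_exp_neg V_nonneg[OF t]])
  finally show ?thesis by simp
qed

lemma w1_bound:
  assumes t: "t \<ge> 0"
  shows "(w 1 t)\<^sup>2 \<le> \<epsilon>\<^sup>2 * (1 + bb)\<^sup>2 / c * V t"
proof -
  define Iw where "Iw = integral {0..1} (\<lambda>x. \<bar>w x t\<bar>)"
  have cU: "continuous_on {0..1} (\<lambda>y. u y t)" by (rule Ucont[OF t])
  have caw: "continuous_on {0..1} (\<lambda>x. \<bar>w x t\<bar>)" by (intro continuous_intros wcont t)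
  have Iw0: "0 \<le> Iw" unfolding Iw_def
    by (rule integral_nonneg) (auto intro!: integrable_continuous_interval caw)
  have "w 1 t = integral {0..1} (\<lambda>y. khat (1 - y) * u y t) - integral {0..1} (\<lambda>y. k (1 - y) * u y t)"
    unfolding w_def conv_def using bc[of t] t by simp
  also have "\<dots> = integral {0..1} (\<lambda>y. (khat (1 - y) - k (1 - y)) * u y t)"
    by (subst integral_diff[symmetric])
       (auto simp: left_diff_distrib intro!: conv_integrable[OF khcont cU, of 1, simplified]
          conv_integrable[OF kcont cU, of 1, simplified])
  finally have w1: "w 1 t = integral {0..1} (\<lambda>y. (khat (1 - y) - k (1 - y)) * u y t)" .
  have aU: "integral {0..1} (\<lambda>y. \<bar>u y t\<bar>) \<le> (1 + bb) * Iw"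
  proof -
    have "integral {0..1} (\<lambda>y. \<bar>u y t\<bar>) \<le> integral {0..1} (\<lambda>y. \<bar>w y t\<bar> + bb * Iw)"
    proof (rule Henstock_Kurzweil_Integration.integral_le)
      show "(\<lambda>y. \<bar>u y t\<bar>) integrable_on {0..1}" by (auto intro!: integrable_continuous_interval continuous_intros cU)
      show "(\<lambda>y. \<bar>w y t\<bar> + bb * Iw) integrable_on {0..1}" by (auto intro!: integrable_continuous_interval continuous_intros caw)
      fix y :: real assume y: "y \<in> {0..1}"
      have "\<bar>conv \<beta> (\<lambda>y. w y t) y\<bar> \<le> bb * integral {0..y} (\<lambda>x. \<bar>w x t\<bar>)"
        by (rule conv_abs_bound[OF bcont wcont[OF t] y bnd])
      also have "\<dots> \<le> bb * Iw" unfolding Iw_def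
        using y bb0 by (intro mult_left_mono integral_subset_le) (auto intro!: integrable_continuous_interval cont_sub01[OF caw y] caw)
      finally show "\<bar>u y t\<bar> \<le> \<bar>w y t\<bar> + bb * Iw" using inverse[OF t y] by linarith
    qed
    also have "\<dots> = Iw + bb * Iw" unfolding Iw_def
      by (subst integral_add) (auto intro!: integrable_continuous_interval caw)
    finally show ?thesis by (simp add: algebra_simps)
  qed
  have "norm (integral {0..1} (\<lambda>y. (khat (1 - y) - k (1 - y)) * u y t)) \<le> integral {0..1} (\<lambda>y. \<epsilon> * \<bar>u y t\<bar>)"
  proof (rule integral_norm_bound_integral)
    show "(\<lambda>y. (khat (1 - y) - k (1 - y)) * u y t) integrable_on {0..1}"
      using conv_integrable[OF khcont cU, of 1] conv_integrable[OF kcont cU, of 1]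
      by (auto simp: left_diff_distrib intro!: integrable_diff)
    show "(\<lambda>y. \<epsilon> * \<bar>u y t\<bar>) integrable_on {0..1}" by (auto intro!: integrable_continuous_interval continuous_intros cU)
    fix y :: real assume y: "y \<in> {0..1}"
    then have "\<bar>khat (1 - y) - k (1 - y)\<bar> \<le> \<epsilon>" using err[of "1 - y"] by auto
    then show "norm ((khat (1 - y) - k (1 - y)) * u y t) \<le> \<epsilon> * \<bar>u y t\<bar>"
      by (simp add: abs_mult mult_right_mono)
  qed
  then have "\<bar>w 1 t\<bar> \<le> integral {0..1} (\<lambda>y. \<epsilon> * \<bar>u y t\<bar>)" using w1 by simp
  also have "\<dots> = \<epsilon> * integral {0..1} (\<lambda>y. \<bar>u y t\<bar>)" by simp
  also have "\<dots> \<le> \<epsilon> * ((1 + bb) * Iw)" using eps_pos aU by (intro mult_left_mono) auto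
  finally have a1: "\<bar>w 1 t\<bar> \<le> \<epsilon> * (1 + bb) * Iw" by simp
  have "(w 1 t)\<^sup>2 \<le> (\<epsilon> * (1 + bb) * Iw)\<^sup>2"
    using a1 by (metis abs_ge_zero order_trans power2_abs power_mono)
  also have "\<dots> = (\<epsilon> * (1 + bb))\<^sup>2 * Iw\<^sup>2" by (simp add: power_mult_distrib)
  also have "\<dots> \<le> (\<epsilon> * (1 + bb))\<^sup>2 * (V t / c)"
    using absw_bound[OF t] by (intro mult_left_mono) (auto simp: Iw_def)
  finally show ?thesis by (simp add: power_mult_distrib)
qed

end

context setting begin

lemma swap_cont:
  fixes F :: "real \<Rightarrow> real \<Rightarrow> real"
  assumes F: "continuous_on ({0..1} \<times> {0..}) (\<lambda>p. F (fst p) (snd p))"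
  shows "continuous_on ({0..} \<times> cbox 0 1) (\<lambda>q. F (snd q) (fst q))"
proof -
  have "continuous_on ({0..} \<times> cbox 0 1) (\<lambda>q. (\<lambda>p. F (fst p) (snd p)) (snd q, fst q))"
    by (rule continuous_on_compose2[OF F]) (auto intro!: continuous_intros simp: box_real)
  then show ?thesis by simp
qed

lemma wjc: "continuous_on ({0..1} \<times> {0..}) (\<lambda>p. w (fst p) (snd p))"
  unfolding w_def by (intro continuous_intros ucont conv_param_cont[OF kcont ucont])

lemma Wjc: "continuous_on ({0..1} \<times> {0..}) (\<lambda>p. W (fst p) (snd p))"
  unfolding W_def by (intro continuous_intros utc conv_param_cont[OF kcont utc])

lemma wtd:
  assumes x: "x \<in> {0..1}" and t: "t \<ge> 0"
  shows "((\<lambda>t. w x t) has_real_derivative W x t) (at t within {0..})"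
proof -
  have "((\<lambda>t. integral (cbox 0 x) (\<lambda>y. k (x - y) * u y t)) has_field_derivative
          integral (cbox 0 x) (\<lambda>y. k (x - y) * ut y t)) (at t within {0..})"
  proof (rule leibniz_rule_field_derivative)
    fix s y assume s: "s \<in> {0::real..}" and y: "y \<in> cbox 0 x"
    then have "y \<in> {0..1}" using x by (auto simp: box_real)
    then show "((\<lambda>s. k (x - y) * u y s) has_field_derivative k (x - y) * ut y s) (at s within {0..})"
      using s by (intro DERIV_cmult utd) auto
  next
    fix s :: real assume "s \<in> {0..}"
    then show "(\<lambda>y. k (x - y) * u y s) integrable_on cbox 0 x"
      using conv_integrable[OF kcont Ucont x] by (simp add: box_real)
  next
    have c1: "continuous_on ({0..} \<times> cbox 0 x) (\<lambda>q. k (x - snd q))"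
      by (rule continuous_on_compose2[OF kcont]) (use x in \<open>auto intro!: continuous_intros simp: box_real\<close>)
    have c2: "continuous_on ({0..} \<times> cbox 0 x) (\<lambda>q. (\<lambda>p. ut (fst p) (snd p)) (snd q, fst q))"
      by (rule continuous_on_compose2[OF utc]) (use x in \<open>auto intro!: continuous_intros simp: box_real\<close>)
    show "continuous_on ({0..} \<times> cbox 0 x) (\<lambda>(s, y). k (x - y) * ut y s)"
      using continuous_on_mult[OF c1 c2] by (simp add: case_prod_beta)
  qed (use t in \<open>auto simp: convex_real_interval\<close>)
  then have "((\<lambda>t. conv k (\<lambda>y. u y t) x) has_real_derivative conv k (\<lambda>y. ut y t) x) (at t within {0..})"
    by (simp add: conv_def box_real)
  then show ?thesis unfolding w_def W_def
    by (intro DERIV_diff utd x t)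
qed

definition Vd where "Vd t = integral {0..1} (\<lambda>x. exp (c * x) * (2 * w x t * W x t))"

lemma Vderiv:
  assumes t: "t \<ge> 0"
  shows "(V has_real_derivative Vd t) (at t within {0..})"
proof -
  have "((\<lambda>t. integral (cbox 0 1) (\<lambda>x. exp (c * x) * (w x t)\<^sup>2)) has_field_derivative
          integral (cbox 0 1) (\<lambda>x. exp (c * x) * (2 * w x t * W x t))) (at t within {0..})"
  proof (rule leibniz_rule_field_derivative)
    fix s x assume s: "s \<in> {0::real..}" and x: "x \<in> cbox (0::real) 1"
    then have x': "x \<in> {0..1}" by (simp add: box_real)
    have "((\<lambda>s. w x s) has_real_derivative W x s) (at s within {0..})" using wtd[OF x'] s by simp
    then show "((\<lambda>s. exp (c * x) * (w x s)\<^sup>2) has_field_derivative exp (c * x) * (2 * w x s * W x s)) (at s within {0..})"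
      by (auto intro!: derivative_eq_intros simp: algebra_simps)
  next
    fix s :: real assume "s \<in> {0..}"
    then show "(\<lambda>x. exp (c * x) * (w x s)\<^sup>2) integrable_on cbox 0 1"
      by (auto simp: box_real intro!: integrable_continuous_interval continuous_intros wcont)
  next
    have c1: "continuous_on ({0..} \<times> cbox 0 1) (\<lambda>q. w (snd q) (fst q))" by (rule swap_cont[OF wjc])
    have c2: "continuous_on ({0..} \<times> cbox 0 1) (\<lambda>q. W (snd q) (fst q))" by (rule swap_cont[OF Wjc])
    have c3: "continuous_on ({0..} \<times> cbox (0::real) 1) (\<lambda>q::real\<times>real. exp (c * snd q))" by (intro continuous_intros)
    show "continuous_on ({0..} \<times> cbox 0 1) (\<lambda>(s, x). exp (c * x) * (2 * w x s * W x s))"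
      using continuous_on_mult[OF c3 continuous_on_mult[OF continuous_on_mult[OF continuous_on_const[of _ 2] c1] c2]]
      by (simp add: case_prod_beta)
  qed (use t in \<open>auto simp: convex_real_interval\<close>)
  moreover have "V = (\<lambda>t. integral (cbox 0 1) (\<lambda>x. exp (c * x) * (w x t)\<^sup>2))"
    by (rule ext) (simp add: V_def box_real)
  ultimately show ?thesis by (simp add: Vd_def box_real)
qed

lemma Vd_formula:
  assumes t: "t \<ge> 0"
  shows "Vd t = exp c * (w 1 t)\<^sup>2 - (w 0 t)\<^sup>2 - c * V t"
proof -
  define G where "G = (\<lambda>x. u 0 t + integral {0..x} (\<lambda>\<xi>. W \<xi> t))"
  have Gw: "G x = w x t" if "x \<in> {0..1}" for x using spatial[OF t that] by (simp add: G_def)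
  define F' where "F' = (\<lambda>x. c * (exp (c * x) * (G x)\<^sup>2) + exp (c * x) * (2 * G x * W x t))"
  have "(F' has_integral ((\<lambda>x. exp (c * x) * (G x)\<^sup>2) 1 - (\<lambda>x. exp (c * x) * (G x)\<^sup>2) 0)) {0..1}"
  proof (rule fundamental_theorem_of_calculus)
    fix x :: real assume x: "x \<in> {0..1}"
    have "(G has_real_derivative W x t) (at x within {0..1})"
      unfolding G_def using integral_has_real_derivative[OF Wcont[OF t] x]
      by (auto intro!: derivative_eq_intros)
    then have "((\<lambda>x. exp (c * x) * (G x)\<^sup>2) has_real_derivative F' x) (at x within {0..1})"
      unfolding F'_def by (auto intro!: derivative_eq_intros simp: algebra_simps)
    then show "((\<lambda>x. exp (c * x) * (G x)\<^sup>2) has_vector_derivative F' x) (at x within {0..1})"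
      by (simp add: has_real_derivative_iff_has_vector_derivative)
  qed simp
  then have "integral {0..1} F' = exp c * (w 1 t)\<^sup>2 - (w 0 t)\<^sup>2"
    using Gw[of 0] Gw[of 1] by (simp add: integral_unique)
  moreover have "integral {0..1} F' = c * V t + Vd t"
  proof -
    have "integral {0..1} F' = integral {0..1} (\<lambda>x. c * (exp (c * x) * (w x t)\<^sup>2) + exp (c * x) * (2 * w x t * W x t))"
      unfolding F'_def by (rule integral_cong) (simp add: Gw)
    also have "\<dots> = integral {0..1} (\<lambda>x. c * (exp (c * x) * (w x t)\<^sup>2)) + Vd t"
      unfolding Vd_def
      by (rule integral_add) (auto intro!: integrable_continuous_interval continuous_intros wcont Wcont t)
    also have "\<dots> = c * V t + Vd t" by (simp add: V_def)
    finally show ?thesis .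
  qed
  ultimately show ?thesis by simp
qed

definition cs where "cs = c - exp c / c * \<epsilon>\<^sup>2 * (1 + B)\<^sup>2"

lemma Vd_le:
  assumes t: "t \<ge> 0"
  shows "Vd t \<le> - cs * V t"
proof -
  have V0: "0 \<le> V t" by (rule V_nonneg[OF t])
  have "Vd t \<le> exp c * (w 1 t)\<^sup>2 - c * V t" using Vd_formula[OF t] by simp
  also have "exp c * (w 1 t)\<^sup>2 \<le> exp c * (\<epsilon>\<^sup>2 * (1 + bb)\<^sup>2 / c * V t)"
    using w1_bound[OF t] by (intro mult_left_mono) auto
  also have "\<epsilon>\<^sup>2 * (1 + bb)\<^sup>2 / c * V t \<le> \<epsilon>\<^sup>2 * (1 + B)\<^sup>2 / c * V t"
    using bb0 bbB cpos V0 by (intro mult_right_mono divide_right_mono mult_left_mono power_mono) auto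
  finally have "Vd t \<le> exp c * (\<epsilon>\<^sup>2 * (1 + B)\<^sup>2 / c * V t) - c * V t"
    by (simp add: mult_left_mono)
  also have "\<dots> = - cs * V t" by (simp add: cs_def algebra_simps)
  finally show ?thesis .
qed

lemma V_decay:
  assumes T: "T \<ge> 0"
  shows "V T \<le> exp (- cs * T) * V 0"
proof -
  define \<psi> where "\<psi> = (\<lambda>t. exp (cs * t) * V t)"
  have "\<psi> T \<le> \<psi> 0"
  proof (rule decr_le[where f=\<psi> and a=0 and b=T and x=T and f'="\<lambda>t. exp (cs * t) * (cs * V t + Vd t)"])
    fix t assume t: "t \<in> {0..T}"
    have "(V has_real_derivative Vd t) (at t within {0..T})"
      by (rule DERIV_subset[OF Vderiv]) (use t in auto)
    then show "(\<psi> has_real_derivative exp (cs * t) * (cs * V t + Vd t)) (at t within {0..T})"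
      unfolding \<psi>_def by (auto intro!: derivative_eq_intros simp: algebra_simps)
    show "exp (cs * t) * (cs * V t + Vd t) \<le> 0"
      using Vd_le[of t] t by (intro mult_nonneg_nonpos) auto
  qed (use T in auto)
  then have "exp (cs * T) * V T \<le> V 0" by (simp add: \<psi>_def)
  then show ?thesis by (simp add: exp_minus field_simps)
qed

end

context setting begin

lemma abs_int_le:
  assumes "continuous_on {0..1} f" "x \<in> {0..1}"
  shows "integral {0..x} (\<lambda>y. \<bar>f y\<bar>) \<le> integral {0..1} (\<lambda>y. \<bar>(f::real\<Rightarrow>real) y\<bar>)"
proof -
  have caw: "continuous_on {0..1} (\<lambda>y. \<bar>f y\<bar>)" by (intro continuous_intros assms(1))
  show ?thesis using assms(2)
    by (intro integral_subset_le) (auto intro!: integrable_continuous_interval cont_sub01[OF caw assms(2)] caw)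
qed

lemma final:
  assumes T: "T \<ge> 0"
  shows "L2_norm01 (\<lambda>x. u x T) \<le> (1 + bb) * (1 + bb * exp bb) * exp (c / 2) * exp (- cs * T / 2) * L2_norm01 (\<lambda>x. u x 0)"
proof -
  define K where "K = bb * exp bb"
  have K0: "0 \<le> K" using bb0 by (simp add: K_def)
  have A: "integral {0..1} (\<lambda>x. (u x T)\<^sup>2) \<le> (1 + bb)\<^sup>2 * integral {0..1} (\<lambda>x. (w x T)\<^sup>2)"
  proof -
    have cg: "continuous_on {0..1} (\<lambda>x. - conv \<beta> (\<lambda>y. w y T) x)"
      by (intro continuous_intros conv_cont bcont wcont T)
    have "integral {0..1} (\<lambda>x. (w x T + - conv \<beta> (\<lambda>y. w y T) x)\<^sup>2) \<le> (1 + bb)\<^sup>2 * integral {0..1} (\<lambda>x. (w x T)\<^sup>2)"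
    proof (rule pert_L2[OF wcont[OF T] cg bb0])
      fix x :: real assume x: "x \<in> {0..1}"
      have "\<bar>conv \<beta> (\<lambda>y. w y T) x\<bar> \<le> bb * integral {0..x} (\<lambda>y. \<bar>w y T\<bar>)"
        by (rule conv_abs_bound[OF bcont wcont[OF T] x bnd])
      also have "\<dots> \<le> bb * integral {0..1} (\<lambda>y. \<bar>w y T\<bar>)"
        using bb0 abs_int_le[OF wcont[OF T] x] by (rule mult_left_mono[rotated])
      finally show "\<bar>- conv \<beta> (\<lambda>y. w y T) x\<bar> \<le> bb * integral {0..1} (\<lambda>y. \<bar>w y T\<bar>)" by simp
    qed
    moreover have "integral {0..1} (\<lambda>x. (w x T + - conv \<beta> (\<lambda>y. w y T) x)\<^sup>2) = integral {0..1} (\<lambda>x. (u x T)\<^sup>2)"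
      by (rule integral_cong) (use inverse[OF T] in simp)
    ultimately show ?thesis by simp
  qed
  have B: "integral {0..1} (\<lambda>x. (w x T)\<^sup>2) \<le> V T"
    unfolding V_def
  proof (rule Henstock_Kurzweil_Integration.integral_le)
    show "(\<lambda>x. (w x T)\<^sup>2) integrable_on {0..1}"
      by (auto intro!: integrable_continuous_interval continuous_intros wcont T)
    show "(\<lambda>x. exp (c * x) * (w x T)\<^sup>2) integrable_on {0..1}"
      by (auto intro!: integrable_continuous_interval continuous_intros wcont T)
    fix x :: real assume x: "x \<in> {0..1}"
    have "1 \<le> exp (c * x)" using cpos x by simp
    then show "(w x T)\<^sup>2 \<le> exp (c * x) * (w x T)\<^sup>2"
      using mult_right_mono[of 1 "exp (c * x)" "(w x T)\<^sup>2"] by simp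
  qed
  have D: "V 0 \<le> exp c * integral {0..1} (\<lambda>x. (w x 0)\<^sup>2)"
  proof -
    have "V 0 \<le> integral {0..1} (\<lambda>x. exp c * (w x 0)\<^sup>2)"
      unfolding V_def
    proof (rule Henstock_Kurzweil_Integration.integral_le)
      show "(\<lambda>x. exp (c * x) * (w x 0)\<^sup>2) integrable_on {0..1}"
        by (auto intro!: integrable_continuous_interval continuous_intros wcont)
      show "(\<lambda>x. exp c * (w x 0)\<^sup>2) integrable_on {0..1}"
        by (auto intro!: integrable_continuous_interval continuous_intros wcont)
      fix x :: real assume x: "x \<in> {0..1}"
      have "exp (c * x) \<le> exp c" using cpos x by (simp add: mult_left_le)
      then show "exp (c * x) * (w x 0)\<^sup>2 \<le> exp c * (w x 0)\<^sup>2"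
        by (rule mult_right_mono) simp
    qed
    then show ?thesis by simp
  qed
  have E: "integral {0..1} (\<lambda>x. (w x 0)\<^sup>2) \<le> (1 + K)\<^sup>2 * integral {0..1} (\<lambda>x. (u x 0)\<^sup>2)"
  proof -
    have cU0: "continuous_on {0..1} (\<lambda>y. u y 0)" by (rule Ucont) simp
    have cg: "continuous_on {0..1} (\<lambda>x. - conv k (\<lambda>y. u y 0) x)"
      by (intro continuous_intros conv_cont kcont cU0)
    have "integral {0..1} (\<lambda>x. (u x 0 + - conv k (\<lambda>y. u y 0) x)\<^sup>2) \<le> (1 + K)\<^sup>2 * integral {0..1} (\<lambda>x. (u x 0)\<^sup>2)"
    proof (rule pert_L2[OF cU0 cg K0])
      fix x :: real assume x': "x \<in> {0..1}"
      have "\<bar>conv k (\<lambda>y. u y 0) x\<bar> \<le> K * integral {0..x} (\<lambda>y. \<bar>u y 0\<bar>)"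
        unfolding K_def by (rule conv_abs_bound[OF kcont cU0 x' kb])
      also have "\<dots> \<le> K * integral {0..1} (\<lambda>y. \<bar>u y 0\<bar>)"
        using K0 abs_int_le[OF cU0 x'] by (intro mult_left_mono) auto
      finally show "\<bar>- conv k (\<lambda>y. u y 0) x\<bar> \<le> K * integral {0..1} (\<lambda>y. \<bar>u y 0\<bar>)" by simp
    qed
    then show ?thesis by (simp add: w_def)
  qed
  define I0 where "I0 = integral {0..1} (\<lambda>x. (u x 0)\<^sup>2)"
  define C where "C = (1 + bb) * (1 + K) * exp (c / 2) * exp (- cs * T / 2)"
  have C0: "0 \<le> C" using bb0 K0 by (simp add: C_def)
  have "integral {0..1} (\<lambda>x. (u x T)\<^sup>2) \<le> (1 + bb)\<^sup>2 * V T"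
    using A B by (meson mult_left_mono order_trans zero_le_power2)
  also have "\<dots> \<le> (1 + bb)\<^sup>2 * (exp (- cs * T) * V 0)"
    using V_decay[OF T] by (intro mult_left_mono) auto
  also have "\<dots> \<le> (1 + bb)\<^sup>2 * (exp (- cs * T) * (exp c * ((1 + K)\<^sup>2 * I0)))"
    using D E unfolding I0_def
    by (intro mult_left_mono) (auto intro: order_trans)
  also have "\<dots> = C\<^sup>2 * I0"
  proof -
    have e: "(exp (c / 2) * exp (- cs * T / 2))\<^sup>2 = exp c * exp (- cs * T)"
      by (simp add: power2_eq_square exp_add[symmetric] algebra_simps)
    have C2pre: "C\<^sup>2 = (1 + bb)\<^sup>2 * (1 + K)\<^sup>2 * (exp (c / 2) * exp (- cs * T / 2))\<^sup>2"
      unfolding C_def by (simp only: power_mult_distrib)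
    have C2: "C\<^sup>2 = (1 + bb)\<^sup>2 * (1 + K)\<^sup>2 * (exp c * exp (- cs * T))"
      using C2pre unfolding e .
    show ?thesis unfolding C2 by (simp only: mult_ac)
  qed
  finally have "integral {0..1} (\<lambda>x. (u x T)\<^sup>2) \<le> C\<^sup>2 * integral {0..1} (\<lambda>x. (u x 0)\<^sup>2)"
    by (simp add: I0_def)
  then have "L2_norm01 (\<lambda>x. u x T) \<le> C * L2_norm01 (\<lambda>x. u x 0)" by (rule L2_le_from_sq[OF _ C0])
  then show ?thesis by (simp add: C_def K_def)
qed

end

theorem theorem2:
  fixes B c \<epsilon> :: real and \<beta> k khat :: "real \<Rightarrow> real" and u :: "real \<Rightarrow> real \<Rightarrow> real"
  assumes "B > 0" and "c > 0"
    and "\<exists>L. L-lipschitz_on {0..1} \<beta>"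
    and "sup_norm01 \<beta> \<le> B"
    and "is_bs_kernel \<beta> k"
    and "continuous_on {0..1} khat"
    and "\<forall>x\<in>{0..1}. \<bar>k x - khat x\<bar> < \<epsilon>"
    and "0 < \<epsilon>" and "\<epsilon> < c * exp (- c / 2) / (1 + B)"
    and "closed_loop_solution \<beta> khat u"
  shows "let bb = sup_norm01 \<beta>;
             cs = c - exp c / c * \<epsilon>\<^sup>2 * (1 + B)\<^sup>2;
             M = (1 + (bb + (1 + bb) * \<epsilon>) * exp ((1 + bb) * \<epsilon>)) * (1 + bb * exp bb) * exp (c / 2)
         in cs > 0 \<and>
            (\<forall>t\<ge>0. L2_norm01 (\<lambda>x. u x t) \<le> M * exp (- cs * t / 2) * L2_norm01 (\<lambda>x. u x 0))"
proof -
  obtain L where lip: "L-lipschitz_on {0..1} \<beta>" using assms(3) by blast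
  have bcont: "continuous_on {0..1} \<beta>" using lipschitz_on_continuous_on[OF lip] .
  define bb where "bb = sup_norm01 \<beta>"
  have bdd: "bdd_above ((\<lambda>x. \<bar>\<beta> x\<bar>) ` {0..1})"
    by (intro bounded_imp_bdd_above compact_imp_bounded compact_continuous_image continuous_intros bcont compact_Icc)
  have bnd: "\<bar>\<beta> x\<bar> \<le> bb" if "x \<in> {0..1}" for x
    unfolding bb_def sup_norm01_def by (rule cSUP_upper[OF that bdd])
  have bb0: "0 \<le> bb" using bnd[of 0] by simp
  have bbB: "bb \<le> B" using assms(4) by (simp add: bb_def)
  have kcont: "continuous_on {0..1} k" using assms(5) by (simp add: is_bs_kernel_def)
  have keq: "k x = - \<beta> x + conv \<beta> k x" if "x \<in> {0..1}" for x
    using assms(5) that by (simp add: is_bs_kernel_def conv_def)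
  obtain ux ut where sol:
      "continuous_on ({0..1} \<times> {0..}) (\<lambda>p. ux (fst p) (snd p))"
      "continuous_on ({0..1} \<times> {0..}) (\<lambda>p. ut (fst p) (snd p))"
      "\<forall>x\<in>{0..1}. \<forall>t\<in>{0..}. ((\<lambda>p. u (fst p) (snd p)) has_derivative (\<lambda>h. ux x t * fst h + ut x t * snd h))
             (at (x, t) within ({0..1} \<times> {0..}))"
      "\<forall>x\<in>{0..1}. \<forall>t\<in>{0..}. ut x t = ux x t + \<beta> x * u 0 t"
      "\<forall>t\<in>{0..}. u 1 t = integral {0..1} (\<lambda>y. khat (1 - y) * u y t)"
    using assms(10) unfolding closed_loop_solution_def by blast
  interpret S: setting \<beta> k khat u ux ut bb \<epsilon> c B
    by unfold_locales (use bcont bnd bb0 bbB kcont keq assms(2,6,7) sol in auto)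
  have cs_eq: "c - exp c / c * \<epsilon>\<^sup>2 * (1 + B)\<^sup>2 = S.cs" by (simp add: S.cs_def)
  have cs_pos: "S.cs > 0"
  proof -
    have e1: "\<epsilon> * (1 + B) < c * exp (- c / 2)" using assms(1,8,9) by (simp add: field_simps)
    have "(\<epsilon> * (1 + B))\<^sup>2 < (c * exp (- c / 2))\<^sup>2"
      using e1 assms(1,8) by (intro power_strict_mono) auto
    also have "\<dots> = c\<^sup>2 * exp (- c)" by (simp add: power_mult_distrib power2_eq_square exp_add[symmetric])
    finally have "exp c / c * (\<epsilon>\<^sup>2 * (1 + B)\<^sup>2) < exp c / c * (c\<^sup>2 * exp (- c))"
      using assms(2) by (intro mult_strict_left_mono) (auto simp: power_mult_distrib)
    also have "\<dots> = c" using assms(2) by (simp add: power2_eq_square exp_minus field_simps)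
    finally show ?thesis by (simp add: S.cs_def algebra_simps)
  qed
  have Mge: "(1 + bb) \<le> 1 + (bb + (1 + bb) * \<epsilon>) * exp ((1 + bb) * \<epsilon>)"
  proof -
    have "bb \<le> bb + (1 + bb) * \<epsilon>" using bb0 assms(8) by simp
    also have "\<dots> \<le> (bb + (1 + bb) * \<epsilon>) * exp ((1 + bb) * \<epsilon>)"
      using bb0 assms(8) by (intro mult_le_cancel_left1[THEN iffD2] disjI1) simp_all
    finally show ?thesis by simp
  qed
  have main: "L2_norm01 (\<lambda>x. u x t) \<le> (1 + (bb + (1 + bb) * \<epsilon>) * exp ((1 + bb) * \<epsilon>)) * (1 + bb * exp bb) * exp (c / 2) * exp (- S.cs * t / 2) * L2_norm01 (\<lambda>x. u x 0)"
    if t: "t \<ge> 0" for t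
  proof -
    have "0 \<le> integral {0..1} (\<lambda>x. (u x 0)\<^sup>2)"
      by (rule integral_nonneg) (auto intro!: integrable_continuous_interval continuous_intros S.Ucont)
    then have L0: "0 \<le> L2_norm01 (\<lambda>x. u x 0)" by (simp add: L2_norm01_def)
    have "L2_norm01 (\<lambda>x. u x t) \<le> (1 + bb) * (1 + bb * exp bb) * exp (c / 2) * exp (- S.cs * t / 2) * L2_norm01 (\<lambda>x. u x 0)"
      by (rule S.final[OF t])
    also have "\<dots> \<le> (1 + (bb + (1 + bb) * \<epsilon>) * exp ((1 + bb) * \<epsilon>)) * (1 + bb * exp bb) * exp (c / 2) * exp (- S.cs * t / 2) * L2_norm01 (\<lambda>x. u x 0)"
      using Mge bb0 L0 by (intro mult_right_mono) auto
    finally show ?thesis .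
  qed
  show ?thesis unfolding Let_def bb_def[symmetric] cs_eq using cs_pos main by auto
qed

end
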